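(* Let $\mathcal P$ be a pre-Hahn-localizable family of probability measures on $(\Omega,\mathcal F)$ with localization $\mathcal Q$ whose supports $\{S_Q\}$ are pairwise disjoint, and let $\mathcal H=\mathcal H_{\mathcal F}^{\mathcal Q}$ be its Hahn-extension. Then for every $\mu\in\mathrm{ca}(\mathcal P)$ the set $\mathcal Q(\mu)$ is at most countable, the formula $\mu^{\mathcal Q}(A)=\sum_{Q\in\mathcal Q(\mu)}\mu(A\cap S_Q)$, $A\in\mathcal H$, defines a finite signed measure on $\mathcal H$ extending $\mu$, and $|\mu^{\mathcal Q}|=|\mu|^{\mathcal Q}$.
   Context: $\mathrm{ca}(\mathcal P)$ is the set of finite signed measures $\mu$ on $\mathcal F$ with $|\mu|\ll P$ for some $P\in\mathcal P$; $|\mu|$ is the total variation measure. $\mathcal P\lll\mathcal Q$ means each $P\in\mathcal P$ is absolutely continuous w.r.t. some $Q\in\mathcal Q$; $\mathrm{sconv}(\mathcal Q)$ denotes countable convex combinations. $\mathcal P$ is pre-Hahn-localizable with localization $\mathcal Q$ and supports $S_Q\in\mathcal F$ if $Q(S_R)=\delta_{QR}$ for $Q,R\in\mathcal Q$ and $\mathcal Q\lll\mathcal P\lll\mathrm{sconv}(\mathcal Q)$. Hahn-extension: $\mathcal H_{\mathcal F}^{\mathcal Q}=\sigma\big(\mathcal F\cup\{\bigcup_{Q\in\mathcal Q}E_Q:E_Q\in\mathcal F,E_Q\subseteq S_Q\}\big)$. $\mathcal Q(\mu)=\{Q\in\mathcal Q:|\mu|(S_Q)>0\}$; since $\mathcal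 Q(|\mu|)=\mathcal Q(\mu)$, $|\mu|^{\mathcal Q}(A)=\sum_{Q\in\mathcal Q(\mu)}|\mu|(A\cap S_Q)$. *)

theory Defs
  imports "HOL-Probability.Probability"
begin

text \<open>Finite signed measures on a sigma-algebra F over Omega, represented as real-valued
  set functions that are countably additive on F (values outside F are irrelevant).\<close>
definition fin_signed_measure :: "'a set \<Rightarrow> 'a set set \<Rightarrow> ('a set \<Rightarrow> real) \<Rightarrow> bool" where
  "fin_signed_measure \<Omega> F \<mu> \<longleftrightarrow> sigma_algebra \<Omega> F \<and>
     (\<forall>A. range A \<subseteq> F \<longrightarrow> disjoint_family A \<longrightarrow> (\<lambda>n. \<mu> (A n)) sums \<mu> (\<Union>n. A n))"

definition tot_var :: "'a set set \<Rightarrow> ('a set \<Rightarrow> real) \<Rightarrow> 'a set \<Rightarrow> real" where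
  "tot_var F \<mu> A = Sup {(\<Sum>B\<in>\<D>. \<bar>\<mu> B\<bar>) | \<D>. finite \<D> \<and> \<D> \<subseteq> F \<and> disjoint \<D> \<and> \<Union>\<D> = A}"

definition ca :: "'a set \<Rightarrow> 'a set set \<Rightarrow> 'a measure set \<Rightarrow> ('a set \<Rightarrow> real) set" where
  "ca \<Omega> F PP = {\<mu>. fin_signed_measure \<Omega> F \<mu> \<and>
      (\<exists>P\<in>PP. \<forall>A\<in>null_sets P. tot_var F \<mu> A = 0)}"

definition dominated_by :: "'a measure set \<Rightarrow> 'a measure set \<Rightarrow> bool" where
  "dominated_by PP QQ \<longleftrightarrow> (\<forall>P\<in>PP. \<exists>Q\<in>QQ. absolutely_continuous Q P)"

definition sconv :: "'a set \<Rightarrow> 'a set set \<Rightarrow> 'a measure set \<Rightarrow> 'a measure set" where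
  "sconv \<Omega> F QQ = {R. space R = \<Omega> \<and> sets R = F \<and>
     (\<exists>c q. (\<forall>n. 0 \<le> c n) \<and> c sums 1 \<and> (\<forall>n. q n \<in> QQ) \<and>
        (\<forall>A\<in>F. emeasure R A = (\<Sum>n. ennreal (c n) * emeasure (q n) A)))}"

definition pre_hahn_localizable ::
    "'a set \<Rightarrow> 'a set set \<Rightarrow> 'a measure set \<Rightarrow> 'a measure set \<Rightarrow> ('a measure \<Rightarrow> 'a set) \<Rightarrow> bool" where
  "pre_hahn_localizable \<Omega> F PP QQ S \<longleftrightarrow>
     (\<forall>Q\<in>QQ. prob_space Q \<and> space Q = \<Omega> \<and> sets Q = F \<and> S Q \<in> F) \<and>
     (\<forall>Q\<in>QQ. \<forall>R\<in>QQ. measure Q (S R) = (if Q = R then 1 else 0)) \<and>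
     dominated_by QQ PP \<and> dominated_by PP (sconv \<Omega> F QQ)"

definition hahn_ext :: "'a set \<Rightarrow> 'a set set \<Rightarrow> 'a measure set \<Rightarrow> ('a measure \<Rightarrow> 'a set) \<Rightarrow> 'a set set" where
  "hahn_ext \<Omega> F QQ S = sigma_sets \<Omega>
     (F \<union> {(\<Union>Q\<in>QQ. E Q) | E. \<forall>Q\<in>QQ. E Q \<in> F \<and> E Q \<subseteq> S Q})"

definition supp_fam :: "'a set set \<Rightarrow> 'a measure set \<Rightarrow> ('a measure \<Rightarrow> 'a set) \<Rightarrow> ('a set \<Rightarrow> real) \<Rightarrow> 'a measure set" where
  "supp_fam F QQ S \<mu> = {Q\<in>QQ. tot_var F \<mu> (S Q) > 0}"

end

theory Submission
  imports Defs
begin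


lemma sm_sa: "fin_signed_measure \<Omega> M m \<Longrightarrow> sigma_algebra \<Omega> M"
  by (simp add: fin_signed_measure_def)

lemma sm_sums: "fin_signed_measure \<Omega> M m \<Longrightarrow> range A \<subseteq> M \<Longrightarrow> disjoint_family A
   \<Longrightarrow> (\<lambda>n. m (A n)) sums m (\<Union>n. A n)"
  by (simp add: fin_signed_measure_def)

lemma sm_empty:
  assumes "fin_signed_measure \<Omega> M m" shows "m {} = 0"
proof -
  interpret sigma_algebra \<Omega> M using sm_sa[OF assms] .
  have "(\<lambda>n. m {}) sums m (\<Union>n::nat. {})"
    by (rule sm_sums[OF assms]) (auto simp: disjoint_family_on_def)
  hence "(\<lambda>n. m {}) \<longlonglongrightarrow> 0" using summable_LIMSEQ_zero sums_summable by blast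
  thus ?thesis by (simp add: LIMSEQ_const_iff)
qed

lemma sm_add:
  assumes "fin_signed_measure \<Omega> M m" "A \<in> M" "B \<in> M" "A \<inter> B = {}"
  shows "m (A \<union> B) = m A + m B"
proof -
  have "range (binaryset A B) \<subseteq> M"
    using assms sm_sa[OF assms(1)] by (auto simp: range_binaryset_eq sigma_algebra_def algebra_iff_Un)
  moreover have "disjoint_family (binaryset A B)"
    using assms(4) by (auto simp: disjoint_family_on_def binaryset_def)
  ultimately have "(\<lambda>n. m (binaryset A B n)) sums m (\<Union>n. binaryset A B n)"
    by (rule sm_sums[OF assms(1)])
  moreover have "(\<lambda>n. m (binaryset A B n)) sums (m A + m B)"
    by (rule binaryset_sums) (rule sm_empty[OF assms(1)])
  ultimately show ?thesis by (simp add: UN_binaryset_eq sums_unique2)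
qed

lemma sm_abs_summable_nat:
  assumes "fin_signed_measure \<Omega> M m" "range A \<subseteq> M" "disjoint_family A"
  shows "summable (\<lambda>n. \<bar>m (A n)\<bar>)"
proof -
  interpret sigma_algebra \<Omega> M using sm_sa[OF assms(1)] .
  define P where "P n = (if m (A n) \<ge> 0 then A n else {})" for n
  define N where "N n = (if m (A n) \<ge> 0 then {} else A n)" for n
  have "range P \<subseteq> M" "range N \<subseteq> M" using assms(2) by (auto simp: P_def N_def)
  moreover have "disjoint_family P" "disjoint_family N"
    using assms(3) by (auto simp: P_def N_def disjoint_family_on_def)
  ultimately have "summable (\<lambda>n. m (P n))" "summable (\<lambda>n. m (N n))"
    using sm_sums[OF assms(1)] sums_summable by blast+
  hence "summable (\<lambda>n. m (P n) - m (N n))" by (rule summable_diff)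
  moreover have "m (P n) - m (N n) = \<bar>m (A n)\<bar>" for n
    by (simp add: P_def N_def sm_empty[OF assms(1)])
  ultimately show ?thesis by simp
qed

lemma sm_has_sum:
  assumes "fin_signed_measure \<Omega> M m" "countable I" "\<And>i. i \<in> I \<Longrightarrow> B i \<in> M"
    "disjoint_family_on B I"
  shows "((\<lambda>i. m (B i)) has_sum m (\<Union>i\<in>I. B i)) I"
proof -
  interpret sigma_algebra \<Omega> M using sm_sa[OF assms(1)] .
  define f where "f = to_nat_on I"
  have inj: "inj_on f I" unfolding f_def using assms(2) by (rule inj_on_to_nat_on)
  define C where "C n = (if n \<in> f ` I then B (the_inv_into I f n) else {})" for n
  have Cf: "C (f i) = B i" if "i \<in> I" for i
    using that inj by (auto simp: C_def the_inv_into_f_f)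
  have rC: "range C \<subseteq> M" using assms(3) inj by (auto simp: C_def the_inv_into_f_f)
  have dC: "disjoint_family C"
    unfolding disjoint_family_on_def
  proof (intro ballI impI)
    fix p n :: nat assume "p \<noteq> n"
    show "C p \<inter> C n = {}"
    proof (cases "p \<in> f ` I \<and> n \<in> f ` I")
      case True
      then obtain i j where "i \<in> I" "j \<in> I" "p = f i" "n = f j" by blast
      hence "i \<noteq> j" using \<open>p \<noteq> n\<close> by auto
      thus ?thesis using Cf assms(4) \<open>i \<in> I\<close> \<open>j \<in> I\<close> \<open>p = f i\<close> \<open>n = f j\<close>
        unfolding disjoint_family_on_def by simp
    qed (auto simp: C_def)
  qed
  have UC: "(\<Union>n. C n) = (\<Union>i\<in>I. B i)"
    using inj by (auto simp: C_def the_inv_into_f_f)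
  have "(\<lambda>n. m (C n)) sums m (\<Union>n. C n)" by (rule sm_sums[OF assms(1) rC dC])
  moreover have "summable (\<lambda>n. norm (m (C n)))"
    using sm_abs_summable_nat[OF assms(1) rC dC] by simp
  ultimately have "((\<lambda>n. m (C n)) has_sum m (\<Union>i\<in>I. B i)) UNIV"
    using norm_summable_imp_has_sum UC by metis
  hence "((\<lambda>n. m (C n)) has_sum m (\<Union>i\<in>I. B i)) (f ` I)"
    by (subst has_sum_cong_neutral[where T=UNIV and g="\<lambda>n. m (C n)"])
       (auto simp: C_def sm_empty[OF assms(1)])
  hence "(((\<lambda>n. m (C n)) \<circ> f) has_sum m (\<Union>i\<in>I. B i)) I"
    using has_sum_reindex[OF inj] by blast
  thus ?thesis by (rule has_sum_cong[THEN iffD1, rotated]) (simp add: Cf)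
qed

definition "unbd M (m::'a set \<Rightarrow> real) E \<longleftrightarrow> (\<forall>K. \<exists>B\<in>M. B \<subseteq> E \<and> \<bar>m B\<bar> > K)"

lemma not_unbd: "\<not> unbd M m X \<Longrightarrow> \<exists>K. \<forall>C\<in>M. C \<subseteq> X \<longrightarrow> \<bar>m C\<bar> \<le> K"
  unfolding unbd_def by (metis not_less)

lemma sa_Diff: "sigma_algebra \<Omega> M \<Longrightarrow> A \<in> M \<Longrightarrow> B \<in> M \<Longrightarrow> A - B \<in> M"
  by (meson sigma_algebra.sigma_sets_eq sigma_sets.Basic sigma_sets_Int sigma_sets_Un Diff_eq
      sigma_algebra_def algebra.compl_sets ring_of_sets.Diff algebra_def)
lemma sa_Int: "sigma_algebra \<Omega> M \<Longrightarrow> A \<in> M \<Longrightarrow> B \<in> M \<Longrightarrow> A \<inter> B \<in> M"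
  by (metis Diff_Diff_Int sa_Diff)
lemma sa_top: "sigma_algebra \<Omega> M \<Longrightarrow> \<Omega> \<in> M"
  by (meson algebra.top sigma_algebra_def)
lemma sa_space: "sigma_algebra \<Omega> M \<Longrightarrow> A \<in> M \<Longrightarrow> A \<subseteq> \<Omega>"
  unfolding sigma_algebra_iff2 by blast

lemma unbd_step:
  assumes sm: "fin_signed_measure \<Omega> M m" and E: "E \<in> M" "unbd M m E"
  shows "\<exists>E'. E' \<in> M \<and> E' \<subseteq> E \<and> unbd M m E' \<and> 1 \<le> \<bar>m (E - E')\<bar>"
proof -
  have sa: "sigma_algebra \<Omega> M" using sm_sa[OF sm] .
  have "\<exists>B\<in>M. B \<subseteq> E \<and> \<bar>m B\<bar> > \<bar>m E\<bar> + 1" using E(2) unfolding unbd_def by (rule spec)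
  then obtain B where B: "B \<in> M" "B \<subseteq> E" "\<bar>m B\<bar> > \<bar>m E\<bar> + 1" by blast
  have EB: "E - B \<in> M" using sa_Diff[OF sa E(1) B(1)] .
  have "E = B \<union> (E - B)" using B by blast
  hence madd: "m E = m B + m (E - B)" using sm_add[OF sm B(1) EB] by auto
  have 1: "1 \<le> \<bar>m (E - B)\<bar>" "1 \<le> \<bar>m B\<bar>" using madd B(3) by auto
  have "unbd M m B \<or> unbd M m (E - B)"
  proof (rule ccontr)
    assume "\<not> (unbd M m B \<or> unbd M m (E - B))"
    hence nB: "\<not> unbd M m B" and nEB: "\<not> unbd M m (E - B)" by auto
    from not_unbd[OF nB] obtain K1 where K1: "\<forall>C\<in>M. C \<subseteq> B \<longrightarrow> \<bar>m C\<bar> \<le> K1" ..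
    from not_unbd[OF nEB] obtain K2 where K2: "\<forall>C\<in>M. C \<subseteq> E - B \<longrightarrow> \<bar>m C\<bar> \<le> K2" ..
    have "\<exists>C\<in>M. C \<subseteq> E \<and> \<bar>m C\<bar> > K1 + K2" using E(2) unfolding unbd_def by (rule spec)
    then obtain C where C: "C \<in> M" "C \<subseteq> E" "\<bar>m C\<bar> > K1 + K2" by blast
    have C1: "C \<inter> B \<in> M" "C - B \<in> M" using sa_Int[OF sa C(1) B(1)] sa_Diff[OF sa C(1) B(1)] by auto
    have "C = (C \<inter> B) \<union> (C - B)" by blast
    hence "m C = m (C \<inter> B) + m (C - B)"
      using sm_add[OF sm C1] by auto
    moreover have "\<bar>m (C \<inter> B)\<bar> \<le> K1" by (rule K1[rule_format, OF C1(1)]) (rule Int_lower2)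
    moreover have "\<bar>m (C - B)\<bar> \<le> K2" by (rule K2[rule_format, OF C1(2)]) (use C(2) in blast)
    ultimately show False using C(3) by linarith
  qed
  thus ?thesis
  proof
    assume "unbd M m B" thus ?thesis using B 1 by (intro exI[of _ B]) simp
  next
    assume "unbd M m (E - B)"
    moreover have "E - (E - B) = B" using B by blast
    ultimately show ?thesis using EB 1 by (intro exI[of _ "E - B"]) simp
  qed
qed

lemma sm_bounded:
  assumes sm: "fin_signed_measure \<Omega> M m"
  shows "\<exists>K. \<forall>E\<in>M. \<bar>m E\<bar> \<le> K"
proof (rule ccontr)
  have sa: "sigma_algebra \<Omega> M" using sm_sa[OF sm] .
  assume nb: "\<not> (\<exists>K. \<forall>E\<in>M. \<bar>m E\<bar> \<le> K)"
  have OM: "\<Omega> \<in> M" using sa by (rule sa_top)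
  have unbO: "unbd M m \<Omega>" unfolding unbd_def
  proof
    fix K
    obtain E where "E \<in> M" "\<not> \<bar>m E\<bar> \<le> K" using nb by blast
    moreover have "E \<subseteq> \<Omega>" using sa \<open>E \<in> M\<close> by (rule sa_space)
    ultimately show "\<exists>B\<in>M. B \<subseteq> \<Omega> \<and> K < \<bar>m B\<bar>" by (intro bexI[of _ E]) auto
  qed
  define nxt where "nxt E = (SOME E'. E' \<in> M \<and> E' \<subseteq> E \<and> unbd M m E' \<and> 1 \<le> \<bar>m (E - E')\<bar>)" for E
  have nxt: "nxt E \<in> M \<and> nxt E \<subseteq> E \<and> unbd M m (nxt E) \<and> 1 \<le> \<bar>m (E - nxt E)\<bar>"
    if "E \<in> M" "unbd M m E" for E
    unfolding nxt_def by (rule someI_ex) (rule unbd_step[OF sm that])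
  define U where "U n = (nxt ^^ n) \<Omega>" for n
  have US: "U (Suc n) = nxt (U n)" for n by (simp add: U_def)
  have U: "U n \<in> M \<and> unbd M m (U n)" for n
  proof (induction n)
    case 0 thus ?case using OM unbO by (simp add: U_def)
  next
    case (Suc n) thus ?case using nxt[of "U n"] US[of n] by simp
  qed
  have Usub: "U (Suc n) \<subseteq> U n" for n using US[of n] nxt[of "U n"] U[of n] by simp
  have dec: "decseq U" using Usub by (rule decseq_SucI)
  define D where "D n = U n - U (Suc n)" for n
  have D1: "1 \<le> \<bar>m (D n)\<bar>" for n
  proof -
    have "1 \<le> \<bar>m (U n - nxt (U n))\<bar>" using nxt[of "U n"] U[of n] by simp
    thus ?thesis by (simp add: D_def US)
  qed
  have rD: "range D \<subseteq> M" using U sa_Diff[OF sa] by (auto simp: D_def)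
  have dD: "disjoint_family D"
    unfolding disjoint_family_on_def
  proof (intro ballI impI)
    fix a b :: nat assume "a \<noteq> b"
    { fix p q :: nat assume "p < q"
      hence "U q \<subseteq> U (Suc p)" using dec by (simp add: decseq_def)
      hence "D p \<inter> D q = {}" by (auto simp: D_def) } note * = this
    show "D a \<inter> D b = {}"
    proof (cases "a < b")
      case True thus ?thesis using * by blast
    next
      case False hence "b < a" using \<open>a \<noteq> b\<close> by simp
      thus ?thesis using *[of b a] by blast
    qed
  qed
  have "(\<lambda>n. m (D n)) sums m (\<Union>n. D n)" by (rule sm_sums[OF sm rD dD])
  hence "(\<lambda>n. m (D n)) \<longlonglongrightarrow> 0" using summable_LIMSEQ_zero sums_summable by blast
  hence "eventually (\<lambda>n. dist (m (D n)) 0 < 1) sequentially"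
    by (rule tendstoD) simp
  then obtain n where "dist (m (D n)) 0 < 1" by (meson eventually_sequentially order.refl)
  with D1[of n] show False by simp
qed

lemma sm_finite_add:
  assumes sm: "fin_signed_measure \<Omega> M m" and "finite D" "D \<subseteq> M" "disjoint D"
  shows "m (\<Union>D) = sum m D"
  using assms(2-4)
proof (induction D rule: finite_induct)
  case empty thus ?case by (simp add: sm_empty[OF sm])
next
  case (insert B D)
  interpret sigma_algebra \<Omega> M using sm_sa[OF sm] .
  have dD: "disjoint D" using insert.prems(2) by (simp add: pairwise_insert)
  have "B \<inter> \<Union>D = {}" using insert.prems(2) insert.hyps(2)
    by (auto simp: pairwise_insert disjnt_def)
  moreover have "\<Union>D \<in> M" using insert finite_Union by auto
  ultimately have "m (B \<union> \<Union>D) = m B + m (\<Union>D)"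
    using sm_add[OF sm] insert.prems by auto
  thus ?case using insert dD by simp
qed

definition tvs where
  "tvs M m A = {(\<Sum>B\<in>\<D>. \<bar>m B\<bar>) | \<D>. finite \<D> \<and> \<D> \<subseteq> M \<and> disjoint \<D> \<and> \<Union>\<D> = A}"

lemma tot_var_tvs: "tot_var M m A = Sup (tvs M m A)"
  by (simp add: tot_var_def tvs_def)

lemma tvs_bdd:
  assumes sm: "fin_signed_measure \<Omega> M m"
  shows "bdd_above (tvs M m A)"
proof -
  interpret sigma_algebra \<Omega> M using sm_sa[OF sm] .
  obtain K where K: "\<forall>E\<in>M. \<bar>m E\<bar> \<le> K" using sm_bounded[OF sm] by blast
  have "s \<le> 2 * K" if sA: "s \<in> tvs M m A" for s
  proof -
    obtain D where D: "s = (\<Sum>B\<in>D. \<bar>m B\<bar>)" "finite D" "D \<subseteq> M" "disjoint D"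
      using sA unfolding tvs_def by blast
    define Dp where "Dp = {B\<in>D. m B \<ge> 0}"
    define Dn where "Dn = {B\<in>D. \<not> m B \<ge> 0}"
    have fin: "finite Dp" "finite Dn" using D by (auto simp: Dp_def Dn_def)
    have sub: "Dp \<subseteq> M" "Dn \<subseteq> M" using D by (auto simp: Dp_def Dn_def)
    have dis: "disjoint Dp" "disjoint Dn" using D(4) by (auto simp: Dp_def Dn_def pairwise_def)
    have DU: "D = Dp \<union> Dn" "Dp \<inter> Dn = {}" by (auto simp: Dp_def Dn_def)
    have "s = (\<Sum>B\<in>Dp. \<bar>m B\<bar>) + (\<Sum>B\<in>Dn. \<bar>m B\<bar>)"
      unfolding D(1) using fin DU sum.union_disjoint by metis
    also have "\<dots> = sum m Dp - sum m Dn"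
      by (simp add: Dp_def Dn_def sum_negf[symmetric])
    also have "\<dots> = m (\<Union>Dp) - m (\<Union>Dn)"
      using sm_finite_add[OF sm] fin sub dis by simp
    also have "\<dots> \<le> 2 * K"
    proof -
      have "\<Union>Dp \<in> M" "\<Union>Dn \<in> M" using finite_Union fin sub by auto
      hence "\<bar>m (\<Union>Dp)\<bar> \<le> K" "\<bar>m (\<Union>Dn)\<bar> \<le> K" using K by auto
      thus ?thesis by linarith
    qed
    finally show ?thesis .
  qed
  thus ?thesis by (auto simp: bdd_above_def)
qed

lemma tv_ge:
  assumes sm: "fin_signed_measure \<Omega> M m" "finite D" "D \<subseteq> M" "disjoint D" "\<Union>D = A"
  shows "(\<Sum>B\<in>D. \<bar>m B\<bar>) \<le> tot_var M m A"
  unfolding tot_var_tvs using assms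
  by (intro cSup_upper tvs_bdd[OF sm(1)]) (auto simp: tvs_def)

lemma tv_abs:
  assumes sm: "fin_signed_measure \<Omega> M m" "A \<in> M"
  shows "\<bar>m A\<bar> \<le> tot_var M m A"
  using tv_ge[OF sm(1), of "{A}"] sm by simp

lemma tv_nonneg:
  assumes sm: "fin_signed_measure \<Omega> M m" "A \<in> M"
  shows "0 \<le> tot_var M m A"
  using tv_abs[OF assms] by simp

lemma tvs_ne: "A \<in> M \<Longrightarrow> tvs M m A \<noteq> {}"
  unfolding tvs_def by (rule ccontr) (auto dest: spec[of _ "{A}"])

lemma tv_superadd:
  assumes sm: "fin_signed_measure \<Omega> M m" and AB: "A \<in> M" "B \<in> M" "A \<inter> B = {}"
  shows "tot_var M m A + tot_var M m B \<le> tot_var M m (A \<union> B)"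
proof -
  have key: "s1 + s2 \<le> tot_var M m (A \<union> B)" if s1: "s1 \<in> tvs M m A" and s2: "s2 \<in> tvs M m B" for s1 s2
  proof -
    obtain D1 where D1: "s1 = (\<Sum>X\<in>D1. \<bar>m X\<bar>)" "finite D1" "D1 \<subseteq> M" "disjoint D1" "\<Union>D1 = A"
      using s1 unfolding tvs_def by blast
    obtain D2 where D2: "s2 = (\<Sum>X\<in>D2. \<bar>m X\<bar>)" "finite D2" "D2 \<subseteq> M" "disjoint D2" "\<Union>D2 = B"
      using s2 unfolding tvs_def by blast
    have int: "D1 \<inter> D2 \<subseteq> {{}}" using D1(5) D2(5) AB(3) by blast
    have "(\<Sum>X\<in>D1 \<inter> D2. \<bar>m X\<bar>) = 0"
      by (rule sum.neutral) (use int sm_empty[OF sm] in auto)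
    hence "(\<Sum>X\<in>D1 \<union> D2. \<bar>m X\<bar>) = s1 + s2"
      using sum.union_inter[OF D1(2) D2(2), of "\<lambda>X. \<bar>m X\<bar>"] D1(1) D2(1) by simp
    moreover have "disjoint (D1 \<union> D2)"
    proof -
      have "disjnt X Y" if "X \<in> D1" "Y \<in> D2" for X Y
        using that D1(5) D2(5) AB(3) by (auto simp: disjnt_def)
      thus ?thesis using D1(4) D2(4) unfolding pairwise_def
        by (metis Un_iff disjnt_sym)
    qed
    ultimately show ?thesis
      using tv_ge[OF sm, of "D1 \<union> D2" "A \<union> B"] D1 D2 by auto
  qed
  have "tot_var M m A \<le> tot_var M m (A \<union> B) - s2" if s2: "s2 \<in> tvs M m B" for s2
    unfolding tot_var_tvs[of M m A]
    by (rule cSup_least[OF tvs_ne[OF AB(1)]]) (use key[OF _ s2] in force)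
  hence "tot_var M m B \<le> tot_var M m (A \<union> B) - tot_var M m A"
    unfolding tot_var_tvs[of M m B]
    by (intro cSup_least[OF tvs_ne[OF AB(2)]]) (simp add: tot_var_tvs algebra_simps)
  thus ?thesis by simp
qed

lemma tv_mono:
  assumes sm: "fin_signed_measure \<Omega> M m" and AB: "A \<in> M" "B \<in> M" "A \<subseteq> B"
  shows "tot_var M m A \<le> tot_var M m B"
proof -
  have sa: "sigma_algebra \<Omega> M" using sm_sa[OF sm] .
  have BA: "B - A \<in> M" using sa_Diff[OF sa AB(2,1)] .
  have "tot_var M m A + tot_var M m (B - A) \<le> tot_var M m (A \<union> (B - A))"
    by (rule tv_superadd[OF sm AB(1) BA]) blast
  moreover have "A \<union> (B - A) = B" using AB(3) by blast
  moreover have "0 \<le> tot_var M m (B - A)" by (rule tv_nonneg[OF sm BA])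
  ultimately show ?thesis by simp
qed

lemma tv_abs_sub:
  assumes sm: "fin_signed_measure \<Omega> M m" and AB: "A \<in> M" "B \<in> M" "A \<subseteq> B"
  shows "\<bar>m A\<bar> \<le> tot_var M m B"
  using tv_abs[OF sm AB(1)] tv_mono[OF assms] by linarith

lemma sa_UN: "sigma_algebra \<Omega> M \<Longrightarrow> (\<And>i::nat. A i \<in> M) \<Longrightarrow> (\<Union>i. A i) \<in> M"
  unfolding sigma_algebra_iff2 by blast

lemma sa_empty: "sigma_algebra \<Omega> M \<Longrightarrow> {} \<in> M"
  unfolding sigma_algebra_iff2 by blast

lemma hahn_gen_Pow:
  assumes sa: "sigma_algebra \<Omega> F" and SF: "\<forall>Q\<in>QQ. S Q \<in> F"
  shows "F \<union> {(\<Union>Q\<in>QQ. E Q) | E. \<forall>Q\<in>QQ. E Q \<in> F \<and> E Q \<subseteq> S Q} \<subseteq> Pow \<Omega>"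
  using sa_space[OF sa] by blast

lemma hahn_sa:
  assumes sa: "sigma_algebra \<Omega> F" and SF: "\<forall>Q\<in>QQ. S Q \<in> F"
  shows "sigma_algebra \<Omega> (hahn_ext \<Omega> F QQ S)"
  unfolding hahn_ext_def by (rule sigma_algebra_sigma_sets[OF hahn_gen_Pow[OF sa SF]])

lemma hahn_F: "F \<subseteq> hahn_ext \<Omega> F QQ S"
  unfolding hahn_ext_def by auto

lemma hahn_int:
  assumes sa: "sigma_algebra \<Omega> F" and SF: "\<forall>Q\<in>QQ. S Q \<in> F"
    and dis: "\<forall>Q\<in>QQ. \<forall>R\<in>QQ. Q \<noteq> R \<longrightarrow> S Q \<inter> S R = {}"
    and A: "A \<in> hahn_ext \<Omega> F QQ S" and Q: "Q \<in> QQ"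
  shows "A \<inter> S Q \<in> F"
  using A unfolding hahn_ext_def
proof induction
  case (Basic a)
  then show ?case
  proof
    assume "a \<in> F" thus ?thesis using sa_Int[OF sa] SF Q by blast
  next
    assume "a \<in> {(\<Union>Q\<in>QQ. E Q) | E. \<forall>Q\<in>QQ. E Q \<in> F \<and> E Q \<subseteq> S Q}"
    then obtain E where a: "a = (\<Union>Q\<in>QQ. E Q)" and E: "\<forall>Q\<in>QQ. E Q \<in> F \<and> E Q \<subseteq> S Q" by blast
    have "a \<inter> S Q = E Q"
    proof
      show "E Q \<subseteq> a \<inter> S Q" using a E Q by blast
      show "a \<inter> S Q \<subseteq> E Q"
      proof
        fix x assume "x \<in> a \<inter> S Q"
        then obtain R where R: "R \<in> QQ" "x \<in> E R" "x \<in> S Q" using a by blast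
        hence "x \<in> S R" using E by blast
        hence "R = Q" using dis R Q by blast
        thus "x \<in> E Q" using R by simp
      qed
    qed
    thus ?thesis using E Q by simp
  qed
next
  case Empty thus ?case using sa_empty[OF sa] by simp
next
  case (Compl a)
  have "(\<Omega> - a) \<inter> S Q = S Q - (a \<inter> S Q)" using sa_space[OF sa, of "S Q"] SF Q by blast
  thus ?case using sa_Diff[OF sa] SF Q Compl.IH by simp
next
  case (Union a)
  have "(\<Union>i. a i) \<inter> S Q = (\<Union>i. a i \<inter> S Q)" by blast
  moreover have "(\<Union>i. a i \<inter> S Q) \<in> F" by (rule sa_UN[OF sa]) (rule Union.IH)
  ultimately show ?case by simp
qed

lemma sa_Un: "sigma_algebra \<Omega> M \<Longrightarrow> A \<in> M \<Longrightarrow> B \<in> M \<Longrightarrow> A \<union> B \<in> M"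
proof -
  assume "sigma_algebra \<Omega> M" "A \<in> M" "B \<in> M"
  then interpret sigma_algebra \<Omega> M by simp
  show ?thesis using \<open>A \<in> M\<close> \<open>B \<in> M\<close> by (rule Un)
qed

lemma ps_em: "prob_space M \<Longrightarrow> emeasure M A = ennreal (measure M A)"
proof -
  assume "prob_space M"
  then interpret prob_space M .
  show ?thesis by (rule emeasure_eq_measure)
qed

lemma ps_compl: "prob_space M \<Longrightarrow> A \<in> sets M \<Longrightarrow> measure M (space M - A) = 1 - measure M A"
proof -
  assume "prob_space M" "A \<in> sets M"
  then interpret prob_space M by simp
  show ?thesis using \<open>A \<in> sets M\<close> by (rule prob_compl)
qed

lemma infsum_finsum:
  fixes f :: "'b \<Rightarrow> 'c \<Rightarrow> real"
  assumes "finite D" "\<And>X. X \<in> D \<Longrightarrow> f X summable_on I"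
  shows "(\<lambda>Q. \<Sum>X\<in>D. f X Q) summable_on I \<and> infsum (\<lambda>Q. \<Sum>X\<in>D. f X Q) I = (\<Sum>X\<in>D. infsum (f X) I)"
  using assms
proof (induction D rule: finite_induct)
  case empty thus ?case by simp
next
  case (insert X D)
  have s1: "f X summable_on I" using insert by simp
  have s2: "(\<lambda>Q. \<Sum>X\<in>D. f X Q) summable_on I" using insert by simp
  have "(\<lambda>Q. f X Q + (\<Sum>X\<in>D. f X Q)) summable_on I" using summable_on_add[OF s1 s2] by simp
  moreover have "infsum (\<lambda>Q. f X Q + (\<Sum>X\<in>D. f X Q)) I = infsum (f X) I + infsum (\<lambda>Q. \<Sum>X\<in>D. f X Q) I"
    using infsum_add[OF s1 s2] by simp
  ultimately show ?case using insert by simp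
qed



theorem theorem4p3:
  fixes \<Omega> :: "'a set" and F :: "'a set set"
    and PP QQ :: "'a measure set" and S :: "'a measure \<Rightarrow> 'a set"
  assumes "sigma_algebra \<Omega> F"
    and "\<forall>P\<in>PP. prob_space P \<and> space P = \<Omega> \<and> sets P = F"
    and "pre_hahn_localizable \<Omega> F PP QQ S"
    and "\<forall>Q\<in>QQ. \<forall>R\<in>QQ. Q \<noteq> R \<longrightarrow> S Q \<inter> S R = {}"
    and "\<mu> \<in> ca \<Omega> F PP"
  shows "countable (supp_fam F QQ S \<mu>)
    \<and> (\<forall>A\<in>hahn_ext \<Omega> F QQ S. (\<forall>Q\<in>QQ. A \<inter> S Q \<in> F)
          \<and> (\<lambda>Q. \<mu> (A \<inter> S Q)) summable_on supp_fam F QQ S \<mu>)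
    \<and> fin_signed_measure \<Omega> (hahn_ext \<Omega> F QQ S)
        (\<lambda>A. \<Sum>\<^sub>\<infinity>Q\<in>supp_fam F QQ S \<mu>. \<mu> (A \<inter> S Q))
    \<and> (\<forall>A\<in>F. (\<Sum>\<^sub>\<infinity>Q\<in>supp_fam F QQ S \<mu>. \<mu> (A \<inter> S Q)) = \<mu> A)
    \<and> (\<forall>A\<in>hahn_ext \<Omega> F QQ S.
         tot_var (hahn_ext \<Omega> F QQ S) (\<lambda>B. \<Sum>\<^sub>\<infinity>Q\<in>supp_fam F QQ S \<mu>. \<mu> (B \<inter> S Q)) A
         = (\<Sum>\<^sub>\<infinity>Q\<in>supp_fam F QQ S \<mu>. tot_var F \<mu> (A \<inter> S Q)))"
proof -
  have saF: "sigma_algebra \<Omega> F" by fact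
  have smF: "fin_signed_measure \<Omega> F \<mu>" using assms(5) by (simp add: ca_def)
  obtain P where P: "P \<in> PP" and Pnull: "\<forall>A\<in>null_sets P. tot_var F \<mu> A = 0"
    using assms(5) unfolding ca_def by blast
  have QQ: "\<And>Q. Q \<in> QQ \<Longrightarrow> prob_space Q \<and> space Q = \<Omega> \<and> sets Q = F \<and> S Q \<in> F"
    using assms(3) unfolding pre_hahn_localizable_def by blast
  have QS: "\<And>Q R. Q \<in> QQ \<Longrightarrow> R \<in> QQ \<Longrightarrow> measure Q (S R) = (if Q = R then 1 else 0)"
    using assms(3) unfolding pre_hahn_localizable_def by blast
  have SF: "\<forall>Q\<in>QQ. S Q \<in> F" using QQ by blast
  have "dominated_by PP (sconv \<Omega> F QQ)"
    using assms(3) unfolding pre_hahn_localizable_def by blast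
  then obtain R where R: "R \<in> sconv \<Omega> F QQ" and acR: "absolutely_continuous R P"
    using P unfolding dominated_by_def by blast
  then obtain c q where sR: "space R = \<Omega>" "sets R = F" and c0: "\<And>n. 0 \<le> c n" and q: "\<And>n. q n \<in> QQ"
    and emR: "\<And>A. A \<in> F \<Longrightarrow> emeasure R A = (\<Sum>n. ennreal (c n) * emeasure (q n) A)"
    unfolding sconv_def by blast
  have nullP: "tot_var F \<mu> A = 0" if "A \<in> F" "emeasure R A = 0" for A
  proof -
    have "A \<in> null_sets R" using that sR by (intro null_setsI) auto
    hence "A \<in> null_sets P" using acR unfolding absolutely_continuous_def by blast
    thus ?thesis using Pnull by blast
  qed
  have emq: "emeasure (q n) X = ennreal (measure (q n) X)" for n X
    using QQ[OF q[of n]] ps_em by blast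
  define H where "H = hahn_ext \<Omega> F QQ S"
  define Sp where "Sp = supp_fam F QQ S \<mu>"
  define nu where "nu = (\<lambda>A. \<Sum>\<^sub>\<infinity>Q\<in>Sp. \<mu> (A \<inter> S Q))"
  have saH: "sigma_algebra \<Omega> H" unfolding H_def by (rule hahn_sa[OF saF SF])
  have FH: "F \<subseteq> H" unfolding H_def by (rule hahn_F)
  have Hint: "A \<inter> S Q \<in> F" if "A \<in> H" "Q \<in> QQ" for A Q
    using hahn_int[OF saF SF assms(4)] that unfolding H_def by blast
  have SpQQ: "Sp \<subseteq> QQ" unfolding Sp_def supp_fam_def by blast
  have disI: "disjoint_family_on (\<lambda>Q. X \<inter> S Q) I" if "I \<subseteq> QQ" for X I
    using assms(4) that unfolding disjoint_family_on_def by blast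
  define J where "J = {n. 0 < c n}"
  have suppJ: "Sp \<subseteq> q ` J"
  proof
    fix Q assume QSp: "Q \<in> Sp"
    hence Q: "Q \<in> QQ" "tot_var F \<mu> (S Q) > 0" unfolding Sp_def supp_fam_def by auto
    show "Q \<in> q ` J"
    proof (rule ccontr)
      assume nQ: "Q \<notin> q ` J"
      have z: "ennreal (c n) * emeasure (q n) (S Q) = 0" for n
      proof (cases "0 < c n")
        case True
        hence "q n \<noteq> Q" using nQ unfolding J_def by blast
        hence "measure (q n) (S Q) = 0" using QS[OF q[of n] Q(1)] by simp
        thus ?thesis by (simp add: emq)
      next
        case False hence "c n = 0" using c0[of n] by simp
        thus ?thesis by simp
      qed
      hence "(\<lambda>n. ennreal (c n) * emeasure (q n) (S Q)) = (\<lambda>n. 0)" by (intro ext)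
      hence "emeasure R (S Q) = 0" using emR[of "S Q"] SF Q(1) by simp
      hence "tot_var F \<mu> (S Q) = 0" using nullP SF Q(1) by blast
      thus False using Q(2) by simp
    qed
  qed
  have cJ: "countable (q ` J)" by simp
  have cSp: "countable Sp" using countable_subset[OF suppJ cJ] .
  have hsum: "((\<lambda>Q. \<mu> (A \<inter> S Q)) has_sum \<mu> (\<Union>Q\<in>Sp. A \<inter> S Q)) Sp" if "A \<in> H" for A
    by (rule sm_has_sum[OF smF cSp]) (use Hint[OF that] SpQQ disI[OF SpQQ] in auto)
  have summ: "(\<lambda>Q. \<mu> (A \<inter> S Q)) summable_on Sp" if "A \<in> H" for A
    using hsum[OF that] by (rule has_sum_imp_summable)
  define T where "T = (\<Union>n. if 0 < c n then S (q n) else {})"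
  have TF: "T \<in> F" unfolding T_def
    by (rule sa_UN[OF saF]) (use SF q sa_empty[OF saF] in auto)
  have TU: "T = (\<Union>Q\<in>q ` J. S Q)"
  proof (rule set_eqI, rule iffI)
    fix x assume "x \<in> T"
    then obtain n where "x \<in> (if 0 < c n then S (q n) else {})" unfolding T_def by blast
    hence "0 < c n" "x \<in> S (q n)" by (auto split: if_splits)
    thus "x \<in> (\<Union>Q\<in>q ` J. S Q)" unfolding J_def by blast
  next
    fix x assume "x \<in> (\<Union>Q\<in>q ` J. S Q)"
    then obtain n where "n \<in> J" "x \<in> S (q n)" by blast
    thus "x \<in> T" unfolding T_def J_def by (intro UN_I[of n]) auto
  qed
  have OT: "\<Omega> - T \<in> F" using sa_Diff[OF saF sa_top[OF saF] TF] .
  have "ennreal (c n) * emeasure (q n) (\<Omega> - T) = 0" for n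
  proof (cases "0 < c n")
    case True
    have qn: "prob_space (q n)" "space (q n) = \<Omega>" "sets (q n) = F" "S (q n) \<in> F" using QQ[OF q[of n]] by auto
    have "measure (q n) (\<Omega> - S (q n)) = 1 - measure (q n) (S (q n))"
      using ps_compl[OF qn(1), of "S (q n)"] qn by simp
    also have "\<dots> = 0" using QS[OF q[of n] q[of n]] by simp
    finally have "emeasure (q n) (\<Omega> - S (q n)) = 0" by (simp add: emq)
    moreover have "\<Omega> - T \<subseteq> \<Omega> - S (q n)"
    proof -
      have nJ: "n \<in> J" using True J_def by simp
      have "S (q n) \<subseteq> T" unfolding TU by (rule UN_upper) (rule imageI[OF nJ])
      thus ?thesis by (rule Diff_mono[OF order.refl])
    qed
    moreover have "\<Omega> - S (q n) \<in> sets (q n)" using qn sa_Diff[OF saF sa_top[OF saF]] by simp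
    ultimately have "emeasure (q n) (\<Omega> - T) \<le> 0" using emeasure_mono[of "\<Omega> - T" "\<Omega> - S (q n)" "q n"] by simp
    hence "emeasure (q n) (\<Omega> - T) = 0" by simp
    thus ?thesis by simp
  next
    case False hence "c n = 0" using c0[of n] by simp
    thus ?thesis by simp
  qed
  hence "(\<lambda>n. ennreal (c n) * emeasure (q n) (\<Omega> - T)) = (\<lambda>n. 0)" by (intro ext)
  hence "emeasure R (\<Omega> - T) = 0" using emR[OF OT] by simp
  hence tvOT: "tot_var F \<mu> (\<Omega> - T) = 0" using nullP[OF OT] by simp
  have part4: "nu A = \<mu> A" if A: "A \<in> F" for A
  proof -
    have AT: "A \<inter> T \<in> F" "A - T \<in> F" using sa_Int[OF saF A TF] sa_Diff[OF saF A TF] by auto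
    have "A - T \<subseteq> \<Omega> - T" using sa_space[OF saF A] by blast
    hence "\<bar>\<mu> (A - T)\<bar> \<le> 0" using tv_abs_sub[OF smF AT(2) OT] tvOT by simp
    hence z: "\<mu> (A - T) = 0" by simp
    have "A = (A \<inter> T) \<union> (A - T)" by blast
    moreover have "(A \<inter> T) \<inter> (A - T) = {}" by blast
    ultimately have "\<mu> A = \<mu> (A \<inter> T) + \<mu> (A - T)" using sm_add[OF smF AT] by simp
    hence muA: "\<mu> A = \<mu> (A \<inter> T)" using z by simp
    have qJQ: "q ` J \<subseteq> QQ" using q by blast
    have "((\<lambda>Q. \<mu> (A \<inter> S Q)) has_sum \<mu> (\<Union>Q\<in>q ` J. A \<inter> S Q)) (q ` J)"
      by (rule sm_has_sum[OF smF cJ]) (use sa_Int[OF saF A] SF qJQ disI[OF qJQ] in auto)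
    moreover have "(\<Union>Q\<in>q ` J. A \<inter> S Q) = A \<inter> T" unfolding TU by blast
    ultimately have hs: "((\<lambda>Q. \<mu> (A \<inter> S Q)) has_sum \<mu> A) (q ` J)" using muA by simp
    have "nu A = (\<Sum>\<^sub>\<infinity>Q\<in>q ` J. \<mu> (A \<inter> S Q))" unfolding nu_def
    proof (rule infsum_cong_neutral)
      fix Q assume Q: "Q \<in> q ` J - Sp"
      hence Q1: "Q \<in> QQ" "\<not> tot_var F \<mu> (S Q) > 0" using qJQ unfolding Sp_def supp_fam_def by auto
      have SQ: "S Q \<in> F" using SF Q1(1) by blast
      have "\<bar>\<mu> (A \<inter> S Q)\<bar> \<le> tot_var F \<mu> (S Q)"
        by (rule tv_abs_sub[OF smF sa_Int[OF saF A SQ] SQ]) (rule Int_lower2)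
      thus "\<mu> (A \<inter> S Q) = 0" using Q1(2) by simp
    qed (use suppJ in auto)
    also have "\<dots> = \<mu> A" using hs by (rule infsumI)
    finally show ?thesis .
  qed
  have smH: "fin_signed_measure \<Omega> H nu"
    unfolding fin_signed_measure_def
  proof (intro conjI allI impI)
    show "sigma_algebra \<Omega> H" by (rule saH)
    fix A :: "nat \<Rightarrow> 'a set" assume rA: "range A \<subseteq> H" and dA: "disjoint_family A"
    have AH: "A n \<in> H" for n using rA by blast
    define f where "f = (\<lambda>n Q. \<mu> (A n \<inter> S Q))"
    have cI: "countable ((UNIV :: nat set) \<times> Sp)" by (rule countable_SIGMA) (simp_all add: cSp countableI_type)
    have "((\<lambda>p. \<mu> (A (fst p) \<inter> S (snd p))) has_sum \<mu> (\<Union>p\<in>UNIV \<times> Sp. A (fst p) \<inter> S (snd p))) (UNIV \<times> Sp)"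
    proof (rule sm_has_sum[OF smF cI])
      fix p :: "nat \<times> 'a measure" assume "p \<in> UNIV \<times> Sp"
      hence "snd p \<in> QQ" using SpQQ by auto
      thus "A (fst p) \<inter> S (snd p) \<in> F" using Hint[OF AH] by blast
    next
      show "disjoint_family_on (\<lambda>p. A (fst p) \<inter> S (snd p)) (UNIV \<times> Sp)"
        unfolding disjoint_family_on_def
      proof (intro ballI impI)
        fix p p' :: "nat \<times> 'a measure" assume p: "p \<in> UNIV \<times> Sp" "p' \<in> UNIV \<times> Sp" "p \<noteq> p'"
        show "A (fst p) \<inter> S (snd p) \<inter> (A (fst p') \<inter> S (snd p')) = {}"
        proof (cases "snd p = snd p'")
          case True
          have "fst p \<noteq> fst p'"
          proof
            assume "fst p = fst p'"
            hence "p = p'" using True by (rule prod_eqI)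
            thus False using p(3) by contradiction
          qed
          hence e: "A (fst p) \<inter> A (fst p') = {}" by (rule disjoint_family_onD[OF dA UNIV_I UNIV_I])
          have "A (fst p) \<inter> S (snd p) \<inter> (A (fst p') \<inter> S (snd p')) \<subseteq> A (fst p) \<inter> A (fst p')"
            by (intro Int_mono Int_lower1)
          thus ?thesis unfolding e by (rule subset_empty[THEN iffD1])
        next
          case False
          have "snd p \<in> Sp" "snd p' \<in> Sp" using p(1,2) by (simp_all add: mem_Times_iff)
          hence sp: "snd p \<in> QQ" "snd p' \<in> QQ" using SpQQ by (simp_all add: subsetD)
          have e: "S (snd p) \<inter> S (snd p') = {}" by (rule assms(4)[rule_format, OF sp False])
          have "A (fst p) \<inter> S (snd p) \<inter> (A (fst p') \<inter> S (snd p')) \<subseteq> S (snd p) \<inter> S (snd p')"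
            by (intro Int_mono Int_lower2)
          thus ?thesis unfolding e by (rule subset_empty[THEN iffD1])
        qed
      qed
    qed
    hence "(\<lambda>p. \<mu> (A (fst p) \<inter> S (snd p))) summable_on (UNIV \<times> Sp)" by (rule has_sum_imp_summable)
    moreover have "(\<lambda>(n, Q). f n Q) = (\<lambda>p. \<mu> (A (fst p) \<inter> S (snd p)))"
      unfolding f_def by (rule ext) (simp add: case_prod_beta)
    ultimately have sAB: "(\<lambda>(n, Q). f n Q) summable_on (UNIV \<times> Sp)" by simp
    have sw: "infsum (\<lambda>n. infsum (\<lambda>Q. f n Q) Sp) UNIV = infsum (\<lambda>Q. infsum (\<lambda>n. f n Q) UNIV) Sp"
      by (rule infsum_swap_banach[OF sAB])
    have s1: "(\<lambda>n. infsum (f n) Sp) summable_on UNIV"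
      using summable_on_Sigma_banach[of f UNIV "\<lambda>_. Sp"] sAB by simp
    have inner: "infsum (\<lambda>n. f n Q) UNIV = \<mu> ((\<Union>n. A n) \<inter> S Q)" if Q: "Q \<in> Sp" for Q
    proof -
      have QQ': "Q \<in> QQ" using Q SpQQ by blast
      have "((\<lambda>n. \<mu> (A n \<inter> S Q)) has_sum \<mu> (\<Union>n\<in>UNIV. A n \<inter> S Q)) UNIV"
      proof (rule sm_has_sum[OF smF])
        show "countable (UNIV :: nat set)" by simp
        show "A n \<inter> S Q \<in> F" for n using Hint[OF AH QQ'] .
        show "disjoint_family_on (\<lambda>n. A n \<inter> S Q) UNIV"
          using dA unfolding disjoint_family_on_def by blast
      qed
      moreover have "(\<Union>n\<in>UNIV. A n \<inter> S Q) = (\<Union>n. A n) \<inter> S Q" by blast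
      ultimately show ?thesis unfolding f_def by (simp add: infsumI)
    qed
    have nuA: "(\<lambda>n. nu (A n)) = (\<lambda>n. infsum (f n) Sp)" unfolding nu_def f_def by simp
    have "nu (\<Union>n. A n) = infsum (\<lambda>Q. infsum (\<lambda>n. f n Q) UNIV) Sp"
      unfolding nu_def by (rule infsum_cong) (simp add: inner)
    also have "\<dots> = infsum (\<lambda>n. infsum (f n) Sp) UNIV" using sw by simp
    finally have eq: "infsum (\<lambda>n. infsum (f n) Sp) UNIV = nu (\<Union>n. A n)" by simp
    have "((\<lambda>n. infsum (f n) Sp) has_sum infsum (\<lambda>n. infsum (f n) Sp) UNIV) UNIV"
      using s1 by (rule has_sum_infsum)
    hence "((\<lambda>n. nu (A n)) has_sum nu (\<Union>n. A n)) UNIV" unfolding nuA eq .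
    thus "(\<lambda>n. nu (A n)) sums nu (\<Union>n. A n)" by (rule has_sum_imp_sums)
  qed
  have nuF: "\<And>B. B \<in> F \<Longrightarrow> nu B = \<mu> B" using part4 by blast
  have tvE: "tot_var H nu E = tot_var F \<mu> E" if E: "E \<in> F" "Q \<in> QQ" "E \<subseteq> S Q" for E Q
  proof -
    have DHF: "D \<subseteq> H \<longleftrightarrow> D \<subseteq> F" if "\<Union>D = E" for D
    proof
      assume DH: "D \<subseteq> H"
      show "D \<subseteq> F"
      proof
        fix X assume X: "X \<in> D"
        hence "X \<subseteq> S Q" using that E(3) by blast
        hence "X = X \<inter> S Q" by blast
        thus "X \<in> F" using Hint[of X Q] DH X E(2) by auto
      qed
    qed (use FH in blast)
    have "tvs H nu E = tvs F \<mu> E"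
    proof (rule set_eqI)
      fix s
      show "s \<in> tvs H nu E \<longleftrightarrow> s \<in> tvs F \<mu> E"
      proof
        assume "s \<in> tvs H nu E"
        then obtain D where D: "s = (\<Sum>X\<in>D. \<bar>nu X\<bar>)" "finite D" "D \<subseteq> H" "disjoint D" "\<Union>D = E"
          unfolding tvs_def by blast
        have DF: "D \<subseteq> F" using DHF[OF D(5)] D(3) by blast
        have "s = (\<Sum>X\<in>D. \<bar>\<mu> X\<bar>)" unfolding D(1) by (rule sum.cong) (use DF nuF in auto)
        thus "s \<in> tvs F \<mu> E" unfolding tvs_def using D DF by blast
      next
        assume "s \<in> tvs F \<mu> E"
        then obtain D where D: "s = (\<Sum>X\<in>D. \<bar>\<mu> X\<bar>)" "finite D" "D \<subseteq> F" "disjoint D" "\<Union>D = E"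
          unfolding tvs_def by blast
        have DH: "D \<subseteq> H" using D(3) FH by blast
        have "s = (\<Sum>X\<in>D. \<bar>nu X\<bar>)" unfolding D(1) by (rule sum.cong) (use D(3) nuF in auto)
        thus "s \<in> tvs H nu E" unfolding tvs_def using D DH by blast
      qed
    qed
    thus ?thesis by (simp add: tot_var_tvs)
  qed
  have part5: "tot_var H nu A = (\<Sum>\<^sub>\<infinity>Q\<in>Sp. tot_var F \<mu> (A \<inter> S Q))" if A: "A \<in> H" for A
  proof -
    define Tv where "Tv Q = tot_var F \<mu> (A \<inter> S Q)" for Q
    have fin: "(\<Union>Q\<in>G. A \<inter> S Q) \<in> H \<and> (\<Sum>Q\<in>G. tot_var H nu (A \<inter> S Q)) \<le> tot_var H nu (\<Union>Q\<in>G. A \<inter> S Q)"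
      if "finite G" "G \<subseteq> QQ" for G
      using that
    proof (induction G rule: finite_induct)
      case empty
      have "{} \<in> H" by (rule sa_empty[OF saH])
      thus ?case using tv_nonneg[OF smH, of "{}"] by simp
    next
      case (insert Q G)
      have Q: "Q \<in> QQ" and G: "G \<subseteq> QQ" using insert.prems by auto
      have IH: "(\<Union>Q\<in>G. A \<inter> S Q) \<in> H" "(\<Sum>Q\<in>G. tot_var H nu (A \<inter> S Q)) \<le> tot_var H nu (\<Union>Q\<in>G. A \<inter> S Q)"
        using insert.IH[OF G] by (rule conjunct1, rule conjunct2)
      have AQ: "A \<inter> S Q \<in> H" using Hint[OF A Q] FH by blast
      have dj: "(A \<inter> S Q) \<inter> (\<Union>Q\<in>G. A \<inter> S Q) = {}"
      proof -
        have "S Q \<inter> S Q' = {}" if "Q' \<in> G" for Q'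
          by (rule assms(4)[rule_format, OF Q subsetD[OF G that]]) (use that insert.hyps(2) in blast)
        thus ?thesis by blast
      qed
      have U: "(\<Union>Q\<in>insert Q G. A \<inter> S Q) = (A \<inter> S Q) \<union> (\<Union>Q\<in>G. A \<inter> S Q)" by simp
      have "(\<Union>Q\<in>insert Q G. A \<inter> S Q) \<in> H" unfolding U by (rule sa_Un[OF saH AQ IH(1)])
      moreover have "tot_var H nu (A \<inter> S Q) + tot_var H nu (\<Union>Q\<in>G. A \<inter> S Q) \<le> tot_var H nu (\<Union>Q\<in>insert Q G. A \<inter> S Q)"
        unfolding U by (rule tv_superadd[OF smH AQ IH(1) dj])
      ultimately show ?case using IH(2) insert.hyps by simp
    qed
    have lower: "sum Tv G \<le> tot_var H nu A" if G: "finite G" "G \<subseteq> Sp" for G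
    proof -
      have GQ: "G \<subseteq> QQ" using G SpQQ by blast
      have "sum Tv G = (\<Sum>Q\<in>G. tot_var H nu (A \<inter> S Q))"
      proof (rule sum.cong)
        fix Q assume "Q \<in> G"
        hence Q: "Q \<in> QQ" using GQ by blast
        show "Tv Q = tot_var H nu (A \<inter> S Q)" unfolding Tv_def
          by (rule tvE[OF Hint[OF A Q] Q, symmetric]) (rule Int_lower2)
      qed simp
      also have "\<dots> \<le> tot_var H nu (\<Union>Q\<in>G. A \<inter> S Q)" using fin[OF G(1) GQ] by (rule conjunct2)
      also have "\<dots> \<le> tot_var H nu A"
        by (rule tv_mono[OF smH conjunct1[OF fin[OF G(1) GQ]] A]) blast
      finally show ?thesis .
    qed
    have Tv0: "0 \<le> Tv Q" if "Q \<in> Sp" for Q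
      unfolding Tv_def using that SpQQ by (intro tv_nonneg[OF smF] Hint[OF A]) auto
    have sTv: "Tv summable_on Sp"
    proof (rule nonneg_bdd_above_summable_on)
      show "bdd_above (sum Tv ` {G. G \<subseteq> Sp \<and> finite G})"
      proof (rule bdd_aboveI[where M = "tot_var H nu A"])
        fix x assume "x \<in> sum Tv ` {G. G \<subseteq> Sp \<and> finite G}"
        then obtain G where "x = sum Tv G" "G \<subseteq> Sp" "finite G" by blast
        thus "x \<le> tot_var H nu A" using lower[of G] by simp
      qed
    qed (rule Tv0)
    have ge: "infsum Tv Sp \<le> tot_var H nu A"
      by (rule infsum_le_finite_sums[OF sTv lower])
    have absS: "(\<lambda>Q. \<bar>\<mu> (X \<inter> S Q)\<bar>) summable_on Sp" if "X \<in> H" for X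
      using summable_on_iff_abs_summable_on_real[THEN iffD1, OF summ[OF that]] unfolding real_norm_def .
    have b1: "\<bar>nu X\<bar> \<le> infsum (\<lambda>Q. \<bar>\<mu> (X \<inter> S Q)\<bar>) Sp" if X: "X \<in> H" for X
    proof -
      have "(\<lambda>Q. norm (\<mu> (X \<inter> S Q))) summable_on Sp"
        using summable_on_iff_abs_summable_on_real[THEN iffD1, OF summ[OF X]] .
      from norm_infsum_bound[OF this] show ?thesis unfolding nu_def real_norm_def .
    qed
    have le: "tot_var H nu A \<le> infsum Tv Sp"
      unfolding tot_var_tvs
    proof (rule cSup_least[OF tvs_ne[OF A]])
      fix s assume "s \<in> tvs H nu A"
      then obtain D where D: "s = (\<Sum>X\<in>D. \<bar>nu X\<bar>)" "finite D" "D \<subseteq> H" "disjoint D" "\<Union>D = A"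
        unfolding tvs_def by blast
      have DH: "X \<in> H" if "X \<in> D" for X using D(3) that by (rule subsetD)
      have "s \<le> (\<Sum>X\<in>D. infsum (\<lambda>Q. \<bar>\<mu> (X \<inter> S Q)\<bar>) Sp)"
        unfolding D(1) by (rule sum_mono) (rule b1[OF DH])
      also have "\<dots> = infsum (\<lambda>Q. \<Sum>X\<in>D. \<bar>\<mu> (X \<inter> S Q)\<bar>) Sp"
        using infsum_finsum[of D "\<lambda>X Q. \<bar>\<mu> (X \<inter> S Q)\<bar>" Sp] D(2) absS DH by simp
      also have "\<dots> \<le> infsum Tv Sp"
      proof (rule infsum_mono)
        show "(\<lambda>Q. \<Sum>X\<in>D. \<bar>\<mu> (X \<inter> S Q)\<bar>) summable_on Sp"
          using infsum_finsum[of D "\<lambda>X Q. \<bar>\<mu> (X \<inter> S Q)\<bar>" Sp] D(2) absS DH by simp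
        show "Tv summable_on Sp" by (rule sTv)
        fix Q assume QSp: "Q \<in> Sp"
        have Q: "Q \<in> QQ" using SpQQ QSp by (rule subsetD)
        define D' where "D' = (\<lambda>X. X \<inter> S Q) ` D"
        have eqD: "(\<Sum>Y\<in>D'. \<bar>\<mu> Y\<bar>) = (\<Sum>X\<in>D. \<bar>\<mu> (X \<inter> S Q)\<bar>)"
          unfolding D'_def
        proof (subst sum.reindex_nontrivial[OF D(2)])
          fix X Y assume XY: "X \<in> D" "Y \<in> D" "X \<noteq> Y" "X \<inter> S Q = Y \<inter> S Q"
          have "X \<inter> Y = {}" using D(4) XY(1-3) unfolding pairwise_def disjnt_def by blast
          hence "X \<inter> S Q = {}" using XY(4) by blast
          thus "\<bar>\<mu> (X \<inter> S Q)\<bar> = 0" by (simp add: sm_empty[OF smF])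
        qed (simp add: comp_def)
        have leD: "(\<Sum>Y\<in>D'. \<bar>\<mu> Y\<bar>) \<le> tot_var F \<mu> (A \<inter> S Q)"
        proof (rule tv_ge[OF smF])
          show "finite D'" unfolding D'_def using D(2) by (rule finite_imageI)
          show "D' \<subseteq> F" unfolding D'_def using Hint[OF DH Q] by blast
          show "disjoint D'" unfolding D'_def pairwise_def disjnt_def
          proof (intro ballI impI)
            fix Y1 Y2 assume Y: "Y1 \<in> (\<lambda>X. X \<inter> S Q) ` D" "Y2 \<in> (\<lambda>X. X \<inter> S Q) ` D" "Y1 \<noteq> Y2"
            then obtain X1 X2 where X: "X1 \<in> D" "X2 \<in> D" "Y1 = X1 \<inter> S Q" "Y2 = X2 \<inter> S Q" by blast
            hence "X1 \<noteq> X2" using Y(3) by blast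
            hence "X1 \<inter> X2 = {}" using D(4) X(1,2) unfolding pairwise_def disjnt_def by blast
            thus "Y1 \<inter> Y2 = {}" using X(3,4) by blast
          qed
          show "\<Union>D' = A \<inter> S Q" unfolding D'_def using D(5) by blast
        qed
        show "(\<Sum>X\<in>D. \<bar>\<mu> (X \<inter> S Q)\<bar>) \<le> Tv Q" unfolding Tv_def using eqD leD by linarith
      qed
      finally show "s \<le> infsum Tv Sp" .
    qed
    show ?thesis using ge le unfolding Tv_def by simp
  qed
  show ?thesis
    unfolding H_def[symmetric] Sp_def[symmetric]
  proof (intro conjI ballI)
    show "countable Sp" by (rule cSp)
    show "A \<inter> S Q \<in> F" if "A \<in> H" "Q \<in> QQ" for A Q using Hint[OF that] .
    show "(\<lambda>Q. \<mu> (A \<inter> S Q)) summable_on Sp" if "A \<in> H" for A using summ[OF that] .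
    show "fin_signed_measure \<Omega> H (\<lambda>A. \<Sum>\<^sub>\<infinity>Q\<in>Sp. \<mu> (A \<inter> S Q))" using smH unfolding nu_def .
    show "(\<Sum>\<^sub>\<infinity>Q\<in>Sp. \<mu> (A \<inter> S Q)) = \<mu> A" if "A \<in> F" for A using part4[OF that] unfolding nu_def .
    show "tot_var H (\<lambda>B. \<Sum>\<^sub>\<infinity>Q\<in>Sp. \<mu> (B \<inter> S Q)) A = (\<Sum>\<^sub>\<infinity>Q\<in>Sp. tot_var F \<mu> (A \<inter> S Q))"
      if "A \<in> H" for A using part5[OF that] unfolding nu_def .
  qed
qed

end
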